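(* Let $h\ge1$ and let $P(u)=\sum_{s\in\mathcal{S}}p_su^s$ be the step polynomial of a finite step set $\mathcal{S}\subset\mathbb{Z}$ with weights $p_s>0$, which is symmetric, i.e. $P(u)=P(1/u)$, and satisfies $\max\mathcal{S}=h$. For $k\ge1$ let $G_{0,k}(z)$ be the generating function (by length, counted with weight = product of step weights) of positive walks from the origin to altitude $k$, i.e. walks $0=y_0,\dots,y_n=k$ with steps in $\mathcal{S}$ and $y_i\ge1$ for $1\le i\le n$, and let $M_{>0}(z)$ be the generating function of positive meanders, i.e. walks $0=y_0,\dots,y_n$ with steps in $\mathcal{S}$ and $y_i\ge1$ for $1\le i\le n$ (ending anywhere; including the empty walk). Let $u_1(z),\dots,u_h(z)$ be the small roots of $1-zP(u)=0$, i.e. the $h$ roots (Puiseux series in $z$) with $\lim_{z\to0}u_i(z)=0$. Then $$M_{>0}(z)=1+\sum_{k\ge1}G_{0,k}(z)=\prod_{i=1}^h\frac{1}{1-u_i(z)},\qquad G_{0,k}(z)=h_k\big(u_1(z),\dots,u_h(z)\big)\quad(k\ge1),$$ where $h_k(x_1,\dots,x_h)=\sum_{i_1+\dots+i_h=k,\ i_1,\dots,i_h\ge0}x_1^{i_1}\cdots x_h^{i_h}$ is the complete homogeneous symmetric polynomial of degree $k$. *)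

theory Defs
  imports "HOL-Analysis.Analysis" "HOL-Computational_Algebra.Polynomial"
begin

definition stepP :: "int set \<Rightarrow> (int \<Rightarrow> real) \<Rightarrow> complex \<Rightarrow> complex" where
  "stepP S p u = (\<Sum>s\<in>S. complex_of_real (p s) * u powi s)"

text \<open>A walk from the origin is the list of its steps; its altitude after i steps is the
  i-th partial sum. It is positive if all altitudes y_1,...,y_n are at least 1.\<close>
definition positive_walk :: "int list \<Rightarrow> bool" where
  "positive_walk ws \<longleftrightarrow> (\<forall>i\<in>{1..length ws}. sum_list (take i ws) \<ge> 1)"

definition walk_weight :: "(int \<Rightarrow> real) \<Rightarrow> int list \<Rightarrow> real" where
  "walk_weight p ws = prod_list (map p ws)"

definition G_coeff :: "int set \<Rightarrow> (int \<Rightarrow> real) \<Rightarrow> int \<Rightarrow> nat \<Rightarrow> real" where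
  "G_coeff S p k n = (\<Sum>ws\<in>{ws. set ws \<subseteq> S \<and> length ws = n \<and> positive_walk ws \<and> sum_list ws = k}.
       walk_weight p ws)"

definition M_coeff :: "int set \<Rightarrow> (int \<Rightarrow> real) \<Rightarrow> nat \<Rightarrow> real" where
  "M_coeff S p n = (\<Sum>ws\<in>{ws. set ws \<subseteq> S \<and> length ws = n \<and> positive_walk ws}. walk_weight p ws)"

definition Gf :: "int set \<Rightarrow> (int \<Rightarrow> real) \<Rightarrow> int \<Rightarrow> complex \<Rightarrow> complex" where
  "Gf S p k z = (\<Sum>n. complex_of_real (G_coeff S p k n) * z ^ n)"

definition Mf :: "int set \<Rightarrow> (int \<Rightarrow> real) \<Rightarrow> complex \<Rightarrow> complex" where
  "Mf S p z = (\<Sum>n. complex_of_real (M_coeff S p n) * z ^ n)"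

text \<open>The kernel polynomial u^h (1 - z P(u)) in u (h = max S), a genuine polynomial of
  degree 2h whose nonzero roots are the roots of 1 - z P(u) = 0.\<close>
definition kernel_poly :: "int set \<Rightarrow> (int \<Rightarrow> real) \<Rightarrow> complex \<Rightarrow> complex poly" where
  "kernel_poly S p z = monom 1 (nat (Max S)) -
     smult z (\<Sum>s\<in>S. monom (complex_of_real (p s)) (nat (s + Max S)))"

definition roots_in_disk :: "int set \<Rightarrow> (int \<Rightarrow> real) \<Rightarrow> real \<Rightarrow> complex \<Rightarrow> complex multiset" where
  "roots_in_disk S p r z = filter_mset (\<lambda>u. cmod u < r) (proots (kernel_poly S p z))"

definition hcomplete :: "nat \<Rightarrow> complex list \<Rightarrow> complex" where
  "hcomplete k xs = (\<Sum>e\<in>{e :: nat list. length e = length xs \<and> sum_list e = k}.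
       \<Prod>j<length xs. (xs ! j) ^ (e ! j))"

end

theory Submission
  imports Defs "HOL-Computational_Algebra.Fundamental_Theorem_Algebra"
begin

lemma positive_walk_snoc:
  "positive_walk (ws @ [s]) \<longleftrightarrow> positive_walk ws \<and> sum_list ws + s \<ge> 1"
proof -
  have A: "\<And>i. i \<le> length ws \<Longrightarrow> take i (ws @ [s]) = take i ws" by simp
  have B: "{1..length (ws @ [s])} = insert (Suc (length ws)) {1..length ws}" by auto
  show ?thesis
    unfolding positive_walk_def B using A by auto
qed

lemma positive_walk_sum_pos:
  "positive_walk ws \<Longrightarrow> ws \<noteq> [] \<Longrightarrow> sum_list ws \<ge> 1"
  unfolding positive_walk_def by (drule bspec[of _ _ "length ws"]) (auto simp: Suc_le_eq)

lemma walk_weight_snoc: "walk_weight p (ws @ [s]) = walk_weight p ws * p s"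
  by (simp add: walk_weight_def)

lemma walk_weight_Cons: "walk_weight p (s # ws) = p s * walk_weight p ws"
  by (simp add: walk_weight_def)

lemma walk_weight_nonneg:
  "\<forall>s\<in>S. p s > 0 \<Longrightarrow> set ws \<subseteq> S \<Longrightarrow> walk_weight p ws \<ge> 0"
  unfolding walk_weight_def by (rule prod_list_nonneg) (auto intro: less_imp_le)

lemma lists_weight_sum:
  assumes "finite S"
  shows "(\<Sum>ws\<in>{ws. set ws \<subseteq> S \<and> length ws = n}. walk_weight p ws) = (\<Sum>s\<in>S. p s) ^ n"
proof (induction n)
  case 0
  have "{ws. set ws \<subseteq> S \<and> length ws = 0} = {[]}" by auto
  then show ?case by (simp add: walk_weight_def)
next
  case (Suc n)
  let ?L = "\<lambda>n. {ws. set ws \<subseteq> S \<and> length ws = n}"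
  have eq: "?L (Suc n) = (\<lambda>(s, ws). s # ws) ` (S \<times> ?L n)"
  proof (intro equalityI subsetI)
    fix ws assume "ws \<in> ?L (Suc n)"
    then obtain s ws' where "ws = s # ws'" by (cases ws) auto
    with \<open>ws \<in> ?L (Suc n)\<close> show "ws \<in> (\<lambda>(s, ws). s # ws) ` (S \<times> ?L n)" by force
  qed auto
  have inj: "inj_on (\<lambda>(s, ws). s # ws) (S \<times> ?L n)" by (auto simp: inj_on_def)
  have "(\<Sum>ws\<in>?L (Suc n). walk_weight p ws) = (\<Sum>(s, ws)\<in>S \<times> ?L n. p s * walk_weight p ws)"
    unfolding eq by (subst sum.reindex[OF inj]) (simp add: case_prod_unfold walk_weight_Cons)
  also have "\<dots> = (\<Sum>s\<in>S. \<Sum>ws\<in>?L n. p s * walk_weight p ws)"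
    by (rule sum.cartesian_product[symmetric])
  also have "\<dots> = (\<Sum>s\<in>S. p s) * (\<Sum>ws\<in>?L n. walk_weight p ws)"
    by (rule sum_product[symmetric])
  finally show ?case using Suc by simp
qed

lemma G_coeff_rec:
  assumes "finite S" "k \<ge> 1"
  shows "G_coeff S p k (Suc n) = (\<Sum>s\<in>S. p s * G_coeff S p (k - s) n)"
proof -
  let ?A = "\<lambda>k n. {ws. set ws \<subseteq> S \<and> length ws = n \<and> positive_walk ws \<and> sum_list ws = k}"
  have fin: "finite (?A k n)" for k n
    by (rule finite_subset[OF _ finite_lists_length_eq[OF assms(1), of n]]) auto
  have eq: "?A k (Suc n) = (\<lambda>(s, ws). ws @ [s]) ` (SIGMA s:S. ?A (k - s) n)"
  proof (intro equalityI subsetI)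
    fix ws assume ws: "ws \<in> ?A k (Suc n)"
    then obtain s ws' where ws': "ws = ws' @ [s]" by (cases ws rule: rev_cases) auto
    with ws assms show "ws \<in> (\<lambda>(s, ws). ws @ [s]) ` (SIGMA s:S. ?A (k - s) n)"
      by (auto simp: positive_walk_snoc intro!: image_eqI[of _ _ "(s, ws')"])
  next
    fix ws assume "ws \<in> (\<lambda>(s, ws). ws @ [s]) ` (SIGMA s:S. ?A (k - s) n)"
    with assms show "ws \<in> ?A k (Suc n)" by (auto simp: positive_walk_snoc)
  qed
  have inj: "inj_on (\<lambda>(s, ws). ws @ [s]) (SIGMA s:S. ?A (k - s) n)"
    by (auto simp: inj_on_def)
  have "G_coeff S p k (Suc n) = (\<Sum>(s, ws)\<in>(SIGMA s:S. ?A (k - s) n). walk_weight p ws * p s)"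
    unfolding G_coeff_def eq by (subst sum.reindex[OF inj]) (simp add: case_prod_unfold walk_weight_snoc)
  also have "\<dots> = (\<Sum>s\<in>S. \<Sum>ws\<in>?A (k - s) n. walk_weight p ws * p s)"
    by (rule sum.Sigma[symmetric]) (use assms fin in auto)
  also have "\<dots> = (\<Sum>s\<in>S. p s * G_coeff S p (k - s) n)"
    unfolding G_coeff_def by (simp add: sum_distrib_left sum_distrib_right mult.commute)
  finally show ?thesis .
qed

lemma G_coeff_0: "G_coeff S p k 0 = (if k = 0 then 1 else 0)"
proof -
  have "{ws. set ws \<subseteq> S \<and> length ws = 0 \<and> positive_walk ws \<and> sum_list ws = k} =
        (if k = 0 then {[]} else {})"
    by (auto simp: positive_walk_def)
  then show ?thesis by (simp add: G_coeff_def walk_weight_def)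
qed

lemma G_coeff_nonpos:
  assumes "k \<le> 0" "n > 0"
  shows "G_coeff S p k n = 0"
proof -
  have *: "{ws. set ws \<subseteq> S \<and> length ws = n \<and> positive_walk ws \<and> sum_list ws = k} = {}"
    using assms positive_walk_sum_pos by fastforce
  show ?thesis unfolding G_coeff_def * by simp
qed

lemma G_coeff_neg: "k < 0 \<Longrightarrow> G_coeff S p k n = 0"
  by (cases "n = 0") (auto simp: G_coeff_0 G_coeff_nonpos)

lemma G_coeff_nonneg:
  "\<forall>s\<in>S. p s > 0 \<Longrightarrow> G_coeff S p k n \<ge> 0"
  unfolding G_coeff_def by (rule sum_nonneg) (auto intro: walk_weight_nonneg)

lemma M_coeff_le:
  assumes "finite S" "\<forall>s\<in>S. p s > 0"
  shows "M_coeff S p n \<le> (\<Sum>s\<in>S. p s) ^ n"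
proof -
  have "M_coeff S p n \<le> (\<Sum>ws\<in>{ws. set ws \<subseteq> S \<and> length ws = n}. walk_weight p ws)"
    unfolding M_coeff_def
    by (rule sum_mono2[OF finite_lists_length_eq[OF assms(1)]])
       (auto intro: walk_weight_nonneg[OF assms(2)])
  then show ?thesis using lists_weight_sum[OF assms(1)] by simp
qed

lemma G_le_M:
  assumes "finite S" "\<forall>s\<in>S. p s > 0"
  shows "G_coeff S p k n \<le> M_coeff S p n"
  unfolding M_coeff_def G_coeff_def
  by (rule sum_mono2[OF finite_subset[OF _ finite_lists_length_eq[OF assms(1), of n]]])
     (auto intro: walk_weight_nonneg[OF assms(2)])

lemma sum_list_le_Max:
  assumes "finite S" "set ws \<subseteq> S"
  shows "sum_list ws \<le> int (length ws) * Max S"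
  using assms(2)
proof (induction ws)
  case (Cons a ws)
  have "a \<le> Max S" using Cons.prems assms(1) by auto
  with Cons show ?case by (simp add: algebra_simps)
qed simp

lemma M_coeff_group:
  assumes "finite S"
  shows "M_coeff S p n = (\<Sum>k\<in>{0..int n * Max S}. G_coeff S p k n)"
proof -
  let ?A = "{ws. set ws \<subseteq> S \<and> length ws = n \<and> positive_walk ws}"
  have fin: "finite ?A"
    by (rule finite_subset[OF _ finite_lists_length_eq[OF assms(1), of n]]) auto
  have sub: "sum_list ` ?A \<subseteq> {0..int n * Max S}"
  proof
    fix x assume "x \<in> sum_list ` ?A"
    then obtain ws where ws: "ws \<in> ?A" "x = sum_list ws" by auto
    have "sum_list ws \<ge> 0" using positive_walk_sum_pos[of ws] ws by (cases "ws = []") auto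
    moreover have "sum_list ws \<le> int n * Max S" using sum_list_le_Max[OF assms(1), of ws] ws by auto
    ultimately show "x \<in> {0..int n * Max S}" using ws by auto
  qed
  have "M_coeff S p n = (\<Sum>k\<in>{0..int n * Max S}. \<Sum>ws\<in>{ws \<in> ?A. sum_list ws = k}. walk_weight p ws)"
    unfolding M_coeff_def by (rule sum.group[symmetric, OF fin _ sub]) simp
  also have "\<dots> = (\<Sum>k\<in>{0..int n * Max S}. G_coeff S p k n)"
    unfolding G_coeff_def by (intro sum.cong refl) (simp add: conj_assoc)
  finally show ?thesis .
qed

lemma G_coeff_big:
  assumes "finite S" "k > int n * Max S"
  shows "G_coeff S p k n = 0"
proof -
  have *: "{ws. set ws \<subseteq> S \<and> length ws = n \<and> positive_walk ws \<and> sum_list ws = k} = {}"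
    using sum_list_le_Max[OF assms(1)] assms(2) by fastforce
  show ?thesis unfolding G_coeff_def * by simp
qed

lemma pow_nat_powi:
  fixes u :: complex
  assumes "u \<noteq> 0" "s + int N \<ge> 0"
  shows "u ^ nat (s + int N) = u ^ N * u powi s"
proof -
  have "u ^ nat (s + int N) = u powi (s + int N)"
    using assms(2) by (simp add: power_int_nonneg_exp)
  also have "\<dots> = u powi s * u powi (int N)"
    using assms(1) by (rule power_int_add[OF disjI1])
  finally show ?thesis by simp
qed

lemma step_sym:
  assumes fin: "finite S" and pos: "\<forall>s\<in>S. p s > 0"
    and sym: "\<forall>u::complex. u \<noteq> 0 \<longrightarrow> stepP S p u = stepP S p (1 / u)"
  shows "\<forall>s\<in>S. -s \<in> S \<and> p (-s) = p s"
proof -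
  define N where "N = nat (\<Sum>s\<in>S. \<bar>s\<bar>)"
  have N: "\<bar>s\<bar> \<le> int N" if "s \<in> S" for s
    unfolding N_def using member_le_sum[of s S abs] that fin by auto
  have N1: "s + int N \<ge> 0" "- s + int N \<ge> 0" if "s \<in> S" for s
    using N[OF that] by auto
  define A where "A = (\<Sum>s\<in>S. monom (complex_of_real (p s)) (nat (s + int N)))"
  define B where "B = (\<Sum>s\<in>S. monom (complex_of_real (p s)) (nat (- s + int N)))"
  have pA: "poly A u = u ^ N * stepP S p u" if "u \<noteq> 0" for u
    unfolding A_def stepP_def poly_sum poly_monom sum_distrib_left
    by (intro sum.cong refl, subst pow_nat_powi) (use that N1 in \<open>auto simp: mult_ac\<close>)
  have pB: "poly B u = u ^ N * stepP S p (1 / u)" if "u \<noteq> 0" for u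
    unfolding B_def stepP_def poly_sum poly_monom sum_distrib_left
    by (intro sum.cong refl, subst pow_nat_powi)
       (use that N1 in \<open>auto simp: mult_ac power_int_minus_divide power_int_one_over\<close>)
  have AB: "A = B"
  proof (rule ccontr)
    assume "A \<noteq> B"
    then have "A - B \<noteq> 0" by simp
    then have "finite {u. poly (A - B) u = 0}" by (rule poly_roots_finite)
    moreover have "{u::complex. u \<noteq> 0} \<subseteq> {u. poly (A - B) u = 0}"
    proof
      fix u :: complex assume "u \<in> {u. u \<noteq> 0}"
      then have "u \<noteq> 0" by simp
      then have "poly A u = poly B u" using pA pB sym by metis
      then show "u \<in> {u. poly (A - B) u = 0}" by simp
    qed
    moreover have "infinite {u::complex. u \<noteq> 0}"
    proof
      assume "finite {u::complex. u \<noteq> 0}"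
      then have "finite (insert 0 {u::complex. u \<noteq> 0})" by simp
      also have "insert 0 {u::complex. u \<noteq> 0} = UNIV" by auto
      finally show False by (simp add: infinite_UNIV_char_0)
    qed
    ultimately show False using finite_subset by blast
  qed
  show ?thesis
  proof
    fix s assume s: "s \<in> S"
    have cA: "coeff A (nat (s + int N)) = complex_of_real (p s)"
    proof -
      have "coeff A (nat (s + int N)) =
            (\<Sum>s'\<in>S. if s' = s then complex_of_real (p s') else 0)"
        unfolding A_def coeff_sum coeff_monom
        by (intro sum.cong refl) (use N1 s in \<open>auto simp: nat_eq_iff2\<close>)
      also have "\<dots> = complex_of_real (p s)" using s fin by (simp add: sum.delta')
      finally show ?thesis .
    qed
    have cB: "coeff B (nat (s + int N)) = (if -s \<in> S then complex_of_real (p (-s)) else 0)"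
    proof -
      have "coeff B (nat (s + int N)) =
            (\<Sum>s'\<in>S. if s' = -s then complex_of_real (p s') else 0)"
        unfolding B_def coeff_sum coeff_monom
        by (intro sum.cong refl) (use N1 s in \<open>auto simp: nat_eq_iff2\<close>)
      also have "\<dots> = (if -s \<in> S then complex_of_real (p (-s)) else 0)"
        using fin by (simp add: sum.delta')
      finally show ?thesis .
    qed
    from cA cB AB have "complex_of_real (p s) = (if -s \<in> S then complex_of_real (p (-s)) else 0)"
      by simp
    with pos s show "-s \<in> S \<and> p (-s) = p s"
      by (auto split: if_splits)
  qed
qed

locale kset =
  fixes S :: "int set" and p :: "int \<Rightarrow> real"
  assumes fin: "finite S" and ne: "S \<noteq> {}"
    and pos: "\<forall>s\<in>S. p s > 0"
    and sym: "\<forall>u::complex. u \<noteq> 0 \<longrightarrow> stepP S p u = stepP S p (1 / u)"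
    and M1: "Max S \<ge> 1"
begin

abbreviation "M \<equiv> Max S"
abbreviation "H \<equiv> nat (Max S)"
abbreviation "T \<equiv> (\<Sum>s\<in>S. p s)"

lemma symS: "\<forall>s\<in>S. -s \<in> S \<and> p (-s) = p s"
  by (rule step_sym[OF fin pos sym])

lemma MS: "M \<in> S" using fin ne by simp
lemma mMS: "-M \<in> S" using symS MS by auto
lemma le_M: "s \<in> S \<Longrightarrow> s \<le> M" using fin by simp
lemma ge_mM: "s \<in> S \<Longrightarrow> -M \<le> s" using symS le_M[of "-s"] by force
lemma intH: "int H = M" using M1 by simp
lemma H1: "H \<ge> 1" using M1 by simp
lemma T_pos: "T > 0" using pos MS fin by (intro sum_pos2[OF fin MS]) (auto intro: less_imp_le)

lemma K_poly:
  assumes "u \<noteq> 0"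
  shows "poly (kernel_poly S p z) u = u ^ H * (1 - z * stepP S p u)"
proof -
  have "poly (kernel_poly S p z) u = u ^ H - z * (\<Sum>s\<in>S. complex_of_real (p s) * u ^ nat (s + M))"
    by (simp add: kernel_poly_def poly_sum poly_monom)
  also have "(\<Sum>s\<in>S. complex_of_real (p s) * u ^ nat (s + M)) = u ^ H * stepP S p u"
    unfolding stepP_def sum_distrib_left
  proof (intro sum.cong refl)
    fix s assume s: "s \<in> S"
    have "u ^ nat (s + int H) = u ^ H * u powi s"
      by (rule pow_nat_powi[OF assms]) (use ge_mM[OF s] intH in auto)
    then show "complex_of_real (p s) * u ^ nat (s + M) = u ^ H * (complex_of_real (p s) * u powi s)"
      using intH by simp
  qed
  finally show ?thesis by (simp add: algebra_simps)
qed

lemma K_coeff: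
  "coeff (kernel_poly S p z) j =
     (if j = H then 1 else 0) - z * (\<Sum>s\<in>S. if nat (s + M) = j then complex_of_real (p s) else 0)"
  by (simp add: kernel_poly_def coeff_sum coeff_monom)

lemma K_sum_delta:
  assumes "s0 \<in> S"
  shows "(\<Sum>s\<in>S. if nat (s + M) = nat (s0 + M) then complex_of_real (p s) else 0) = p s0"
proof -
  have "(\<Sum>s\<in>S. if nat (s + M) = nat (s0 + M) then complex_of_real (p s) else 0) =
        (\<Sum>s\<in>S. if s = s0 then complex_of_real (p s) else 0)"
    apply (intro sum.cong refl)
    subgoal for s using ge_mM[of s] ge_mM[OF assms] by (auto simp: nat_eq_iff2)
    done
  also have "\<dots> = p s0" using assms fin by (simp add: sum.delta')
  finally show ?thesis .
qed

lemma K_coeff_0: "coeff (kernel_poly S p z) 0 = - z * p (-M)"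
  using K_sum_delta[OF mMS] H1 by (simp add: K_coeff)

lemma K_coeff_top: "coeff (kernel_poly S p z) (2 * H) = - z * p M"
proof -
  have "nat (M + M) = 2 * H" using M1 by simp
  then show ?thesis using K_sum_delta[OF MS] H1 by (simp add: K_coeff)
qed

lemma K_coeff_big: "j > 2 * H \<Longrightarrow> coeff (kernel_poly S p z) j = 0"
  unfolding K_coeff by (auto intro!: sum.neutral dest: le_M)

lemma pM: "p M > 0" and pmM: "p (-M) > 0" using pos MS mMS by auto

lemma K_ne0: "z \<noteq> 0 \<Longrightarrow> kernel_poly S p z \<noteq> 0"
  using K_coeff_0[of z] pmM by auto

lemma K_poly0: "z \<noteq> 0 \<Longrightarrow> poly (kernel_poly S p z) 0 \<noteq> 0"
  using K_coeff_0[of z] pmM by (simp add: poly_0_coeff_0)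

lemma K_degree: "z \<noteq> 0 \<Longrightarrow> degree (kernel_poly S p z) = 2 * H"
  by (intro antisym degree_le le_degree) (use K_coeff_big K_coeff_top pM in auto)

lemma K_refl:
  assumes "t \<noteq> 0"
  shows "poly (kernel_poly S p z) t = t ^ (2 * H) * poly (kernel_poly S p z) (1 / t)"
proof -
  have "poly (kernel_poly S p z) (1 / t) = (1 / t) ^ H * (1 - z * stepP S p t)"
    using K_poly[of "1/t" z] sym[rule_format, of t] assms by simp
  moreover have e: "t ^ (2 * H) * (1 / t) ^ H = t ^ H"
  proof -
    have "t ^ (2 * H) = t ^ H * t ^ H" by (simp add: mult_2 power_add)
    moreover have "(1 / t) ^ H * t ^ H = 1" using assms by (simp add: power_one_over)
    ultimately show ?thesis by (metis mult.assoc mult.right_neutral mult.commute)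
  qed
  ultimately show ?thesis using K_poly[OF assms, of z]
    by (metis (no_types, lifting) mult.assoc)
qed

end

lemma poly_eq_nonzero:
  fixes A B :: "complex poly"
  assumes "\<And>t. t \<noteq> 0 \<Longrightarrow> poly A t = poly B t"
  shows "A = B"
proof (rule ccontr)
  assume "A \<noteq> B"
  then have "A - B \<noteq> 0" by simp
  then have "finite {u. poly (A - B) u = 0}" by (rule poly_roots_finite)
  moreover have "{u::complex. u \<noteq> 0} \<subseteq> {u. poly (A - B) u = 0}" using assms by auto
  moreover have "infinite {u::complex. u \<noteq> 0}"
  proof
    assume "finite {u::complex. u \<noteq> 0}"
    then have "finite (insert 0 {u::complex. u \<noteq> 0})" by simp
    also have "insert 0 {u::complex. u \<noteq> 0} = UNIV" by auto
    finally show False by (simp add: infinite_UNIV_char_0)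
  qed
  ultimately show False using finite_subset by blast
qed

lemma prod_refl_list:
  fixes t :: complex
  assumes "t \<noteq> 0" "\<forall>x\<in>set xs. x \<noteq> 0"
  shows "t ^ length xs * (\<Prod>x\<leftarrow>xs. 1 / t - x) = (\<Prod>x\<leftarrow>xs. - x) * (\<Prod>x\<leftarrow>xs. t - 1 / x)"
  using assms(2)
proof (induction xs)
  case (Cons a xs)
  have e: "t * (1 / t - a) = (- a) * (t - 1 / a)" using assms(1) Cons.prems by (simp add: field_simps)
  have "t ^ length (a # xs) * (\<Prod>x\<leftarrow>a # xs. 1 / t - x) =
        (t * (1 / t - a)) * (t ^ length xs * (\<Prod>x\<leftarrow>xs. 1 / t - x))" by (simp add: mult_ac)
  also have "\<dots> = ((- a) * (t - 1 / a)) * ((\<Prod>x\<leftarrow>xs. - x) * (\<Prod>x\<leftarrow>xs. t - 1 / x))"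
    using Cons e by simp
  also have "\<dots> = (\<Prod>x\<leftarrow>a # xs. - x) * (\<Prod>x\<leftarrow>a # xs. t - 1 / x)" by (simp add: mult_ac)
  finally show ?case .
qed simp

lemma sum_list_singletons: "sum_list (map (\<lambda>x. {#f x#}) xs) = mset (map f xs)"
  by (induction xs) auto

lemma poly_prod_list_map: "poly (\<Prod>x\<leftarrow>xs. f x) t = (\<Prod>x\<leftarrow>xs. poly (f x) t)"
  by (induction xs) auto

context kset
begin

lemma K_decomp:
  assumes "mset xs = proots (kernel_poly S p z)"
  shows "kernel_poly S p z = smult (lead_coeff (kernel_poly S p z)) (\<Prod>x\<leftarrow>xs. [:-x, 1:])"
proof -
  have "(\<Prod>x\<in>#proots (kernel_poly S p z). [:-x, 1:]) = (\<Prod>x\<leftarrow>xs. [:-x, 1:])"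
    unfolding assms[symmetric] by (simp add: prod_mset_prod_list mset_map[symmetric] del: mset_map)
  then show ?thesis using complex_poly_decompose_multiset[of "kernel_poly S p z"] by simp
qed

lemma roots_inv:
  assumes z: "z \<noteq> 0"
  shows "image_mset inverse (proots (kernel_poly S p z)) = proots (kernel_poly S p z)"
proof -
  let ?K = "kernel_poly S p z"
  obtain xs where xs: "mset xs = proots ?K" using ex_mset by blast
  let ?c = "lead_coeff ?K"
  have dec: "?K = smult ?c (\<Prod>x\<leftarrow>xs. [:-x, 1:])" by (rule K_decomp[OF xs])
  have len: "length xs = 2 * H"
    using size_proots_complex[of ?K] K_degree[OF z] xs by (metis size_mset)
  have c0: "?c \<noteq> 0" using K_ne0[OF z] by simp
  have p0: "poly ?K 0 = ?c * (\<Prod>x\<leftarrow>xs. - x)"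
    by (subst dec) (simp add: poly_prod_list_map)
  have nz: "\<forall>x\<in>set xs. x \<noteq> 0"
  proof
    fix x assume "x \<in> set xs"
    moreover have "(\<Prod>x\<leftarrow>xs. - x) \<noteq> 0" using p0 K_poly0[OF z] by auto
    ultimately show "x \<noteq> 0" by (auto simp: prod_list_zero_iff)
  qed
  have pnz: "(\<Prod>x\<leftarrow>xs. - x) \<noteq> 0" using nz by (auto simp: prod_list_zero_iff)
  define L where "L = smult (?c * (\<Prod>x\<leftarrow>xs. - x)) (\<Prod>x\<leftarrow>xs. [:- inverse x, 1:])"
  have "?K = L"
  proof (rule poly_eq_nonzero)
    fix t :: complex assume t: "t \<noteq> 0"
    have "poly ?K t = t ^ (2 * H) * poly ?K (1 / t)" by (rule K_refl[OF t])
    also have "poly ?K (1 / t) = ?c * (\<Prod>x\<leftarrow>xs. 1 / t - x)"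
      by (subst dec) (simp add: poly_prod_list_map)
    also have "t ^ (2 * H) * (?c * (\<Prod>x\<leftarrow>xs. 1 / t - x)) =
               ?c * (t ^ length xs * (\<Prod>x\<leftarrow>xs. 1 / t - x))" using len by simp
    also have "\<dots> = ?c * ((\<Prod>x\<leftarrow>xs. - x) * (\<Prod>x\<leftarrow>xs. t - 1 / x))"
      using prod_refl_list[OF t nz] by simp
    also have "\<dots> = poly L t"
      unfolding L_def by (simp add: poly_prod_list_map divide_inverse)
    finally show "poly ?K t = poly L t" .
  qed
  moreover have "proots L = proots (\<Prod>x\<leftarrow>xs. [:- inverse x, 1:])"
    unfolding L_def by (rule proots_smult) (use c0 pnz in simp)
  ultimately have "proots ?K = proots (\<Prod>x\<leftarrow>xs. [:- inverse x, 1:])" by simp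
  also have "\<dots> = sum_list (map (\<lambda>x. proots [:- inverse x, 1:]) xs)"
  proof -
    have "\<forall>x. [:- inverse x, 1:] \<noteq> (0::complex poly)" by simp
    then have "0 \<notin> set (map (\<lambda>x. [:- inverse x, 1:]) xs)" by auto
    from proots_prod_list[OF this] show ?thesis by (simp add: o_def)
  qed
  also have "\<dots> = sum_list (map (\<lambda>x. {#inverse x#}) xs)"
    using proots_linear_factor[of "- inverse x" for x] by simp
  also have "\<dots> = image_mset inverse (proots ?K)"
    by (simp add: sum_list_singletons xs[symmetric])
  finally show ?thesis by simp
qed

lemma powi_bound:
  fixes x :: complex
  assumes "s \<in> S" "0 < r0" "r0 \<le> 1" "r0 \<le> norm x" "norm x \<le> 1 / r0"
  shows "norm (x powi s) \<le> (1 / r0) ^ H"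
proof -
  have one: "1 \<le> 1 / r0" using assms by simp
  have sH: "nat s \<le> H" "nat (- s) \<le> H" using le_M[OF assms(1)] ge_mM[OF assms(1)] by auto
  show ?thesis
  proof (cases "s \<ge> 0")
    case True
    then have "norm (x powi s) = norm x ^ nat s" by (simp add: norm_power_int power_int_nonneg_exp norm_power)
    also have "\<dots> \<le> (1 / r0) ^ nat s" using assms by (intro power_mono) auto
    also have "\<dots> \<le> (1 / r0) ^ H" using one sH by (intro power_increasing) auto
    finally show ?thesis .
  next
    case False
    have "x powi s = inverse (x powi (- s))" using power_int_minus[of x "-s"] by simp
    then have "norm (x powi s) = inverse (norm x) ^ nat (- s)"
      using False by (simp add: norm_power_int power_int_nonneg_exp norm_inverse power_inverse norm_power)
    also have "\<dots> \<le> (1 / r0) ^ nat (- s)"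
    proof (intro power_mono)
      show "inverse (norm x) \<le> 1 / r0" using le_imp_inverse_le[OF assms(4,2)] by (simp add: inverse_eq_divide)
    qed auto
    also have "\<dots> \<le> (1 / r0) ^ H" using one sH by (intro power_increasing) auto
    finally show ?thesis .
  qed
qed

lemma annulus:
  assumes z: "z \<noteq> 0" and r0: "0 < r0" "r0 \<le> 1" and zs: "norm z * T < r0 ^ H"
    and root: "poly (kernel_poly S p z) x = 0"
  shows "norm x < r0 \<or> norm x > 1 / r0"
proof (rule ccontr)
  assume "\<not> ?thesis"
  then have x: "r0 \<le> norm x" "norm x \<le> 1 / r0" by auto
  then have x0: "x \<noteq> 0" using r0 by auto
  have "x ^ H * (1 - z * stepP S p x) = 0" using root K_poly[OF x0, of z] by simp
  then have one: "z * stepP S p x = 1" using x0 by simp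
  have "norm (stepP S p x) \<le> (\<Sum>s\<in>S. norm (complex_of_real (p s) * x powi s))"
    unfolding stepP_def by (rule norm_sum)
  also have "\<dots> \<le> (\<Sum>s\<in>S. p s * (1 / r0) ^ H)"
  proof (intro sum_mono)
    fix s assume s: "s \<in> S"
    have "norm (complex_of_real (p s) * x powi s) = p s * norm (x powi s)"
      using pos s by (simp add: norm_mult abs_of_pos)
    also have "\<dots> \<le> p s * (1 / r0) ^ H"
      using powi_bound[OF s r0 x] pos s by (intro mult_left_mono) auto
    finally show "norm (complex_of_real (p s) * x powi s) \<le> p s * (1 / r0) ^ H" .
  qed
  also have "\<dots> = T * (1 / r0) ^ H" by (simp add: sum_distrib_right)
  finally have b: "norm (stepP S p x) \<le> T * (1 / r0) ^ H" .
  have "1 = norm z * norm (stepP S p x)" using one by (metis norm_mult norm_one)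
  also have "\<dots> \<le> norm z * (T * (1 / r0) ^ H)" using b by (intro mult_left_mono) auto
  also have "\<dots> = (norm z * T) * (1 / r0) ^ H" by simp
  also have "\<dots> < r0 ^ H * (1 / r0) ^ H"
    using zs r0 by (intro mult_strict_right_mono) auto
  also have "\<dots> = 1" using r0 by (simp add: power_one_over)
  finally show False by simp
qed

lemma split_roots:
  assumes z: "z \<noteq> 0" and r0: "0 < r0" "r0 \<le> 1" and zs: "norm z * T < r0 ^ H"
  defines "A \<equiv> filter_mset (\<lambda>x. norm x < r0) (proots (kernel_poly S p z))"
  shows "size A = H" "proots (kernel_poly S p z) = A + image_mset inverse A"
    "\<forall>x\<in>#A. x \<noteq> 0 \<and> norm x < r0"
    "\<forall>x\<in>#proots (kernel_poly S p z). norm x < r0 \<or> norm x > 1 / r0"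
proof -
  let ?K = "kernel_poly S p z"
  let ?P = "\<lambda>x::complex. norm x < r0"
  define B where "B = filter_mset (\<lambda>x. \<not> ?P x) (proots ?K)"
  have KAB: "proots ?K = A + B" unfolding A_def B_def by (rule multiset_partition)
  show ann: "\<forall>x\<in>#proots ?K. norm x < r0 \<or> norm x > 1 / r0"
    using annulus[OF z r0 zs] K_ne0[OF z] by auto
  have Bbig: "\<forall>x\<in>#B. norm x > 1 / r0" using ann unfolding B_def by auto
  have A0: "0 \<notin># proots ?K" using K_poly0[OF z] K_ne0[OF z] by auto
  show Asmall: "\<forall>x\<in>#A. x \<noteq> 0 \<and> norm x < r0" using A0 unfolding A_def by auto
  have inv: "image_mset inverse (A + B) = A + B" using roots_inv[OF z] KAB by simp
  have "filter_mset ?P (image_mset inverse (A + B)) = filter_mset ?P (A + B)" using inv by simp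
  also have "filter_mset ?P (A + B) = A" unfolding A_def B_def by (simp add: filter_union_mset)
  also have "filter_mset ?P (image_mset inverse (A + B)) =
             image_mset inverse (filter_mset (\<lambda>x. ?P (inverse x)) A) +
             image_mset inverse (filter_mset (\<lambda>x. ?P (inverse x)) B)"
    by (simp add: filter_mset_image_mset)
  also have "filter_mset (\<lambda>x. ?P (inverse x)) A = {#}"
  proof -
    have "filter_mset (\<lambda>x. ?P (inverse x)) A = filter_mset (\<lambda>x. False) A"
    proof (rule filter_mset_cong[OF refl])
      fix x assume "x \<in># A"
      then have x: "x \<noteq> 0" "norm x < r0" using Asmall by auto
      then have "norm (inverse x) > 1 / r0" using r0 by (simp add: norm_inverse norm_divide divide_simps)
      moreover have "1 / r0 \<ge> r0" using r0 by (simp add: field_simps) (metis mult_le_one less_imp_le)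
      ultimately show "?P (inverse x) = False" by auto
    qed
    then show ?thesis by simp
  qed
  also have "filter_mset (\<lambda>x. ?P (inverse x)) B = B"
  proof -
    have "filter_mset (\<lambda>x. ?P (inverse x)) B = filter_mset (\<lambda>x. True) B"
    proof (rule filter_mset_cong[OF refl])
      fix x assume "x \<in># B"
      then have x: "norm x > 1 / r0" using Bbig by auto
      then have "x \<noteq> 0" using r0 by auto
      then have "norm (inverse x) < r0" using x r0 by (simp add: norm_inverse norm_divide divide_simps mult.commute)
      then show "?P (inverse x) = True" by auto
    qed
    then show ?thesis by simp
  qed
  finally have AB: "image_mset inverse B = A" by simp
  then have "image_mset inverse A = image_mset inverse (image_mset inverse B)"
    by simp
  also have "\<dots> = B" by (simp add: multiset.map_comp o_def)
  finally have BA: "B = image_mset inverse A" by simp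
  show "proots ?K = A + image_mset inverse A" using KAB BA by simp
  have "size (proots ?K) = 2 * H" using size_proots_complex K_degree[OF z] by simp
  then show "size A = H" using KAB BA by simp
qed

end

context kset
begin

lemma G_coeff_bound: "norm (complex_of_real (G_coeff S p k n)) \<le> T ^ n"
  using G_coeff_nonneg[OF pos] G_le_M[OF fin pos] M_coeff_le[OF fin pos]
  by (metis abs_of_nonneg norm_of_real order_trans)

lemma G_term_bound:
  "norm (complex_of_real (G_coeff S p k n) * z ^ n) \<le> (norm z * T) ^ n"
proof -
  have "norm (complex_of_real (G_coeff S p k n) * z ^ n) =
        norm (complex_of_real (G_coeff S p k n)) * norm z ^ n" by (simp add: norm_mult norm_power)
  also have "\<dots> \<le> T ^ n * norm z ^ n" using G_coeff_bound by (intro mult_right_mono) auto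
  finally show ?thesis by (simp add: power_mult_distrib mult.commute)
qed

lemma Gf_summable:
  assumes "norm z * T < 1"
  shows "summable (\<lambda>n. norm (complex_of_real (G_coeff S p k n) * z ^ n))"
        "summable (\<lambda>n. complex_of_real (G_coeff S p k n) * z ^ n)"
proof -
  have g: "summable (\<lambda>n. (norm z * T) ^ n)"
    using assms T_pos by (intro summable_geometric) auto
  show "summable (\<lambda>n. norm (complex_of_real (G_coeff S p k n) * z ^ n))"
    by (rule summable_comparison_test[OF _ g]) (auto intro: G_term_bound)
  then show "summable (\<lambda>n. complex_of_real (G_coeff S p k n) * z ^ n)"
    by (rule summable_norm_cancel)
qed

lemma Gf_bound:
  assumes "norm z * T < 1"
  shows "norm (Gf S p k z) \<le> 1 / (1 - norm z * T)"
proof -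
  have g: "(\<lambda>n. (norm z * T) ^ n) sums (1 / (1 - norm z * T))"
    using assms T_pos by (intro geometric_sums) auto
  have "norm (Gf S p k z) \<le> (\<Sum>n. (norm z * T) ^ n)"
    unfolding Gf_def by (rule norm_suminf_le[OF G_term_bound]) (use g in \<open>simp add: sums_iff\<close>)
  also have "\<dots> = 1 / (1 - norm z * T)" using g by (simp add: sums_iff)
  finally show ?thesis .
qed

lemma Gf_zero: "Gf S p 0 z = 1"
proof -
  have "(\<lambda>n. complex_of_real (G_coeff S p 0 n) * z ^ n) = (\<lambda>n. if n = 0 then (\<lambda>_. 1) n else 0)"
    by (auto simp: G_coeff_0 G_coeff_nonpos)
  then show ?thesis unfolding Gf_def using sums_single[of 0 "\<lambda>_. 1::complex"]
    by (simp add: sums_iff)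
qed

lemma Gf_neg: "k < 0 \<Longrightarrow> Gf S p k z = 0"
  by (simp add: Gf_def G_coeff_neg)

lemma Gf_sums: "norm z * T < 1 \<Longrightarrow> (\<lambda>n. complex_of_real (G_coeff S p k n) * z ^ n) sums Gf S p k z"
  unfolding Gf_def by (rule summable_sums[OF Gf_summable(2)])

lemma Gf_rec:
  assumes "norm z * T < 1" "k \<ge> 1"
  shows "Gf S p k z = z * (\<Sum>s\<in>S. complex_of_real (p s) * Gf S p (k - s) z)"
proof -
  let ?a = "\<lambda>n. complex_of_real (G_coeff S p k n) * z ^ n"
  have "(\<lambda>n. z * (\<Sum>s\<in>S. complex_of_real (p s) * (complex_of_real (G_coeff S p (k - s) n) * z ^ n)))
        sums (z * (\<Sum>s\<in>S. complex_of_real (p s) * Gf S p (k - s) z))"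
    by (intro sums_mult sums_sum Gf_sums[OF assms(1)])
  moreover have "(\<lambda>n. z * (\<Sum>s\<in>S. complex_of_real (p s) * (complex_of_real (G_coeff S p (k - s) n) * z ^ n)))
        = (\<lambda>n. ?a (Suc n))"
  proof
    fix n
    have "?a (Suc n) = complex_of_real (\<Sum>s\<in>S. p s * G_coeff S p (k - s) n) * (z * z ^ n)"
      using G_coeff_rec[OF fin assms(2)] by simp
    also have "\<dots> = z * (\<Sum>s\<in>S. complex_of_real (p s) * (complex_of_real (G_coeff S p (k - s) n) * z ^ n))"
      by (simp add: sum_distrib_left sum_distrib_right mult_ac)
    finally have e: "?a (Suc n) = z * (\<Sum>s\<in>S. complex_of_real (p s) * (complex_of_real (G_coeff S p (k - s) n) * z ^ n))" .
    show "z * (\<Sum>s\<in>S. complex_of_real (p s) * (complex_of_real (G_coeff S p (k - s) n) * z ^ n)) = ?a (Suc n)"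
      by (fact e[symmetric])
  qed
  ultimately have "(\<lambda>n. ?a (Suc n)) sums (z * (\<Sum>s\<in>S. complex_of_real (p s) * Gf S p (k - s) z))"
    by simp
  then have "?a sums (z * (\<Sum>s\<in>S. complex_of_real (p s) * Gf S p (k - s) z) + ?a 0)"
    by (rule iffD1[OF sums_Suc_iff])
  moreover have "?a 0 = 0" using assms(2) by (simp add: G_coeff_0)
  ultimately show ?thesis unfolding Gf_def by (simp add: sums_iff)
qed

definition Ff :: "complex \<Rightarrow> complex fps" where
  "Ff z = Abs_fps (\<lambda>n. Gf S p (int n) z)"

lemma Ff_nth: "fps_nth (Ff z) n = Gf S p (int n) z"
  unfolding Ff_def by simp

lemma K_fps:
  "fps_of_poly (kernel_poly S p z) =
     fps_X ^ H - fps_const z * (\<Sum>s\<in>S. fps_const (complex_of_real (p s)) * fps_X ^ nat (s + M))"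
  by (simp add: kernel_poly_def fps_of_poly_diff fps_of_poly_monom fps_of_poly_smult fps_of_poly_sum)

lemma KF_coeff:
  assumes "norm z * T < 1" "n > H"
  shows "fps_nth (fps_of_poly (kernel_poly S p z) * Ff z) n = 0"
proof -
  define k where "k = int n - M"
  have k1: "k \<ge> 1" using assms(2) intH unfolding k_def by linarith
  have "fps_of_poly (kernel_poly S p z) * Ff z =
        fps_X ^ H * Ff z - fps_const z * (\<Sum>s\<in>S. fps_const (complex_of_real (p s)) * (fps_X ^ nat (s + M) * Ff z))"
    unfolding K_fps by (simp add: ring_distribs sum_distrib_left sum_distrib_right mult_ac)
  then have "fps_nth (fps_of_poly (kernel_poly S p z) * Ff z) n =
     fps_nth (Ff z) (n - H) - z * (\<Sum>s\<in>S. complex_of_real (p s) *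
         (if n < nat (s + M) then 0 else fps_nth (Ff z) (n - nat (s + M))))"
    using assms(2) by (simp add: fps_sum_nth fps_X_power_mult_nth)
  also have "(\<Sum>s\<in>S. complex_of_real (p s) *
         (if n < nat (s + M) then 0 else fps_nth (Ff z) (n - nat (s + M)))) =
     (\<Sum>s\<in>S. complex_of_real (p s) *
         (if n < nat (s + M) then 0 else Gf S p (int (n - nat (s + M))) z))"
    by (intro sum.cong refl) (simp add: Ff_nth)
  also have "fps_nth (Ff z) (n - H) = Gf S p (int (n - H)) z" by (simp add: Ff_nth)
  also have "int (n - H) = k" using assms(2) intH unfolding k_def by linarith
  also have "(\<Sum>s\<in>S. complex_of_real (p s) *
         (if n < nat (s + M) then 0 else Gf S p (int (n - nat (s + M))) z)) =
        (\<Sum>s\<in>S. complex_of_real (p s) * Gf S p (k - s) z)"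
  proof (intro sum.cong refl)
    fix s assume s: "s \<in> S"
    show "complex_of_real (p s) * (if n < nat (s + M) then 0 else Gf S p (int (n - nat (s + M))) z) =
          complex_of_real (p s) * Gf S p (k - s) z"
    proof (cases "n < nat (s + M)")
      case True
      then have "k - s < 0" unfolding k_def by linarith
      then show ?thesis using True by (simp add: Gf_neg)
    next
      case False
      then have "int (n - nat (s + M)) = k - s" unfolding k_def using ge_mM[OF s] by linarith
      then show ?thesis using False by simp
    qed
  qed
  also have "Gf S p k z - z * (\<Sum>s\<in>S. complex_of_real (p s) * Gf S p (k - s) z) = 0"
    using Gf_rec[OF assms(1) k1] by simp
  finally show ?thesis .
qed

end

lemma hcomplete_Nil: "hcomplete k [] = (if k = 0 then 1 else 0)"
proof -
  have "{e :: nat list. length e = length ([]::complex list) \<and> sum_list e = k} = (if k = 0 then {[]} else {})"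
    by auto
  then show ?thesis unfolding hcomplete_def by simp
qed

lemma finite_E: "finite {e :: nat list. length e = n \<and> sum_list e = m}"
proof (rule finite_subset[OF _ finite_lists_length_eq[of "{0..m}" n]])
  show "{e :: nat list. length e = n \<and> sum_list e = m} \<subseteq> {xs. set xs \<subseteq> {0..m} \<and> length xs = n}"
    using member_le_sum_list by fastforce
qed simp

lemma hcomplete_Cons: "hcomplete k (x # xs) = (\<Sum>j\<le>k. x ^ j * hcomplete (k - j) xs)"
proof -
  let ?E = "\<lambda>n m. {e :: nat list. length e = n \<and> sum_list e = m}"
  let ?n = "length xs"
  have eq: "?E (Suc ?n) k = (\<lambda>(j, e). j # e) ` (SIGMA j:{..k}. ?E ?n (k - j))"
  proof (intro equalityI subsetI)
    fix e assume e: "e \<in> ?E (Suc ?n) k"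
    then obtain j e' where "e = j # e'" by (cases e) auto
    with e show "e \<in> (\<lambda>(j, e). j # e) ` (SIGMA j:{..k}. ?E ?n (k - j))"
      by (auto intro!: image_eqI[of _ _ "(j, e')"])
  qed auto
  have inj: "inj_on (\<lambda>(j, e). j # e) (SIGMA j:{..k}. ?E ?n (k - j))" by (auto simp: inj_on_def)
  have "hcomplete k (x # xs) = (\<Sum>(j, e)\<in>(SIGMA j:{..k}. ?E ?n (k - j)).
          \<Prod>i<Suc ?n. ((x # xs) ! i) ^ ((j # e) ! i))"
    unfolding hcomplete_def by (simp only: length_Cons eq, subst sum.reindex[OF inj]) (simp add: case_prod_unfold)
  also have "\<dots> = (\<Sum>(j, e)\<in>(SIGMA j:{..k}. ?E ?n (k - j)). x ^ j * (\<Prod>i<?n. (xs ! i) ^ (e ! i)))"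
    by (intro sum.cong refl) (auto simp del: prod.lessThan_Suc simp add: prod.lessThan_Suc_shift)
  also have "\<dots> = (\<Sum>j\<le>k. \<Sum>e\<in>?E ?n (k - j). x ^ j * (\<Prod>i<?n. (xs ! i) ^ (e ! i)))"
    by (rule sum.Sigma[symmetric]) (auto simp: finite_E)
  also have "\<dots> = (\<Sum>j\<le>k. x ^ j * hcomplete (k - j) xs)"
    unfolding hcomplete_def by (simp add: sum_distrib_left)
  finally show ?thesis .
qed

definition Hf :: "complex list \<Rightarrow> complex fps" where
  "Hf xs = Abs_fps (\<lambda>k. hcomplete k xs)"

definition geo :: "complex \<Rightarrow> complex fps" where
  "geo x = Abs_fps (\<lambda>n. x ^ n)"

lemma Hf_nth: "fps_nth (Hf xs) k = hcomplete k xs"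
  unfolding Hf_def by simp

lemma Hf_Nil: "Hf [] = 1"
  by (rule fps_ext) (simp add: Hf_nth hcomplete_Nil)

lemma Hf_Cons: "Hf (x # xs) = geo x * Hf xs"
  by (rule fps_ext) (simp add: Hf_nth hcomplete_Cons fps_mult_nth geo_def atLeast0AtMost)

lemma geo_inv: "(1 - fps_const x * fps_X) * geo x = 1"
proof (rule fps_ext)
  fix n
  have "(1 - fps_const x * fps_X) * geo x = geo x - fps_const x * (fps_X * geo x)"
    by (simp add: algebra_simps)
  then show "fps_nth ((1 - fps_const x * fps_X) * geo x) n = fps_nth 1 n"
    by (cases n) (simp_all add: geo_def fps_X_mult_nth)
qed

lemma fps_of_lin: "fps_of_poly [:1, - (x::complex):] = 1 - fps_const x * fps_X"
proof (rule fps_ext)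
  fix n
  have c: "fps_nth (fps_const x * fps_X) n = (if n = 1 then x else 0)"
    by (subst fps_mult_left_const_nth) (simp add: fps_X_nth)
  have "fps_nth (1 - fps_const x * fps_X) n = fps_nth 1 n - fps_nth (fps_const x * fps_X) n"
    by (rule fps_sub_nth)
  also have "\<dots> = (if n = 0 then 1 else 0) - (if n = 1 then x else 0)" by (simp only: c) simp
  also have "\<dots> = fps_nth (fps_of_poly [:1, - x:]) n"
    by (cases n) (auto simp: coeff_pCons split: nat.split)
  finally show "fps_nth (fps_of_poly [:1, - x:]) n = fps_nth (1 - fps_const x * fps_X) n" ..
qed

lemma Hf_prod: "fps_of_poly (\<Prod>x\<leftarrow>xs. [:1, - x:]) * Hf xs = 1"
proof (induction xs)
  case Nil
  then show ?case by (simp add: Hf_Nil)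
next
  case (Cons a xs)
  have "fps_of_poly (\<Prod>x\<leftarrow>a # xs. [:1, - x:]) * Hf (a # xs) =
        ((1 - fps_const a * fps_X) * geo a) * (fps_of_poly (\<Prod>x\<leftarrow>xs. [:1, - x:]) * Hf xs)"
    by (simp add: Hf_Cons fps_of_poly_mult fps_of_lin mult_ac)
  then show ?case using Cons geo_inv by simp
qed

lemma hcomplete_0: "hcomplete 0 xs = 1"
  by (induction xs) (simp_all add: hcomplete_Nil hcomplete_Cons)

lemma geo_radius:
  assumes "norm x < 1 / 2"
  shows "fps_conv_radius (geo x) \<ge> 2"
  unfolding fps_conv_radius_def
proof (rule conv_radius_geI_ex')
  fix r :: real assume r: "0 < r" "ereal r < 2"
  have "norm (x * of_real r) < 1"
  proof -
    have "norm x * r \<le> norm x * 2" using r by (intro mult_left_mono) auto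
    then show ?thesis using assms r by (simp add: norm_mult)
  qed
  then have "summable (\<lambda>n. (x * of_real r) ^ n)" by (rule summable_geometric)
  then show "summable (\<lambda>n. fps_nth (geo x) n * of_real r ^ n)"
    by (simp add: geo_def power_mult_distrib)
qed

lemma eval_geo:
  assumes "norm x < 1"
  shows "eval_fps (geo x) 1 = 1 / (1 - x)"
  unfolding eval_fps_def geo_def using suminf_geometric[OF assms] by simp

lemma Hf_radius_eval:
  assumes "\<forall>x\<in>set xs. norm x < 1 / 2"
  shows "fps_conv_radius (Hf xs) \<ge> 2 \<and> eval_fps (Hf xs) 1 = (\<Prod>x\<leftarrow>xs. 1 / (1 - x))"
  using assms
proof (induction xs)
  case Nil
  then show ?case by (simp add: Hf_Nil)
next
  case (Cons a xs)
  then have IH: "fps_conv_radius (Hf xs) \<ge> 2" "eval_fps (Hf xs) 1 = (\<Prod>x\<leftarrow>xs. 1 / (1 - x))" by auto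
  have ga: "fps_conv_radius (geo a) \<ge> 2" using Cons.prems by (intro geo_radius) auto
  have "fps_conv_radius (Hf (a # xs)) \<ge> min (fps_conv_radius (geo a)) (fps_conv_radius (Hf xs))"
    unfolding Hf_Cons by (rule fps_conv_radius_mult)
  then have r: "fps_conv_radius (Hf (a # xs)) \<ge> 2" using ga IH(1) by (auto simp: min_def split: if_splits)
  have n1: "ereal (norm (1::complex)) < 2" by simp
  have e12: "\<And>R. ereal 2 \<le> R \<Longrightarrow> ereal (norm (1::complex)) < R"
    using n1 less_le_trans by (metis numeral_eq_ereal)
  have "eval_fps (Hf (a # xs)) 1 = eval_fps (geo a) 1 * eval_fps (Hf xs) 1"
    unfolding Hf_Cons by (rule eval_fps_mult) (use ga IH(1) e12 in \<open>auto\<close>)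
  also have "\<dots> = (\<Prod>x\<leftarrow>a # xs. 1 / (1 - x))"
    using IH(2) eval_geo[of a] Cons.prems by simp
  finally show ?case using r by simp
qed

lemma hcomplete_sums:
  assumes "\<forall>x\<in>set xs. norm x < 1 / 2"
  shows "(\<lambda>k. hcomplete k xs) sums (\<Prod>x\<leftarrow>xs. 1 / (1 - x))"
proof -
  have r: "ereal (norm (1::complex)) < fps_conv_radius (Hf xs)"
    using Hf_radius_eval[OF assms] by (auto intro: less_le_trans[of _ 2])
  show ?thesis using sums_eval_fps[OF r] Hf_radius_eval[OF assms] by (simp add: Hf_nth)
qed

lemma cont_agree:
  fixes f g :: "complex \<Rightarrow> complex"
  assumes U: "open U" "a \<in> U" and f: "continuous_on U f" and g: "continuous_on U g"
    and eq: "\<And>x. x \<in> U \<Longrightarrow> x \<noteq> a \<Longrightarrow> f x = g x"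
  shows "f a = g a"
proof -
  have "isCont f a" "isCont g a" using f g U by (auto simp: continuous_on_eq_continuous_at)
  then have lf: "(f \<longlongrightarrow> f a) (at a)" and lg: "(g \<longlongrightarrow> g a) (at a)"
    by (auto simp: isCont_def)
  have "(g \<longlongrightarrow> f a) (at a)" by (rule Lim_transform_within_open[OF lf U]) (use eq in auto)
  then show ?thesis using tendsto_unique[OF at_neq_bot lg] by simp
qed

lemma prod_map_Cons: "(\<Prod>x\<leftarrow>a # xs. f x) = f a * (\<Prod>x\<leftarrow>xs. f x)"
  by (simp only: list.map prod_list.Cons)

lemma poly_lin_prod_nonzero: "(\<Prod>x\<leftarrow>xs. [:- x, 1:]) \<noteq> (0 :: complex poly)"
  by (auto simp: prod_list_zero_iff)

lemma poly_lin_prod_degree: "degree (\<Prod>x\<leftarrow>xs. [:- x, 1:]) = length (xs :: complex list)"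
proof (induction xs)
  case (Cons a xs)
  have "degree (\<Prod>x\<leftarrow>a # xs. [:- x, 1:]) = degree [:- a, 1:] + degree (\<Prod>x\<leftarrow>xs. [:- x, 1:])"
    unfolding prod_map_Cons by (rule degree_mult_eq) (auto simp: poly_lin_prod_nonzero)
  then show ?case using Cons by simp
qed simp

lemma dvd_from_analytic:
  fixes R :: "complex poly"
  assumes U: "open U" and as: "\<forall>a\<in>set as. a \<in> U" and Q: "continuous_on U Q"
    and eq: "\<forall>t\<in>U. poly R t = poly (\<Prod>a\<leftarrow>as. [:- a, 1:]) t * Q t"
  shows "(\<Prod>a\<leftarrow>as. [:- a, 1:]) dvd R"
  using as eq
proof (induction as arbitrary: R)
  case Nil
  then show ?case by simp
next
  case (Cons a as)
  have aU: "a \<in> U" using Cons.prems by simp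
  have "poly R a = 0" using Cons.prems(2) aU by simp
  then obtain R1 where R1: "R = [:- a, 1:] * R1" using poly_eq_0_iff_dvd by (metis dvdE)
  have eq1: "poly R1 t = poly (\<Prod>a\<leftarrow>as. [:- a, 1:]) t * Q t" if "t \<in> U" "t \<noteq> a" for t
  proof -
    have "poly R t = (t - a) * poly R1 t" unfolding R1 poly_mult by simp
    moreover have "poly (\<Prod>a\<leftarrow>a # as. [:- a, 1:]) t = (t - a) * poly (\<Prod>a\<leftarrow>as. [:- a, 1:]) t"
      unfolding prod_map_Cons poly_mult by simp
    moreover have "poly R t = poly (\<Prod>a\<leftarrow>a # as. [:- a, 1:]) t * Q t"
      using Cons.prems(2) that(1) by blast
    ultimately have "(t - a) * poly R1 t = (t - a) * (poly (\<Prod>a\<leftarrow>as. [:- a, 1:]) t * Q t)"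
      by (metis mult.assoc)
    then show ?thesis using that(2) by simp
  qed
  have "\<forall>t\<in>U. poly R1 t = poly (\<Prod>a\<leftarrow>as. [:- a, 1:]) t * Q t"
  proof
    fix t assume t: "t \<in> U"
    show "poly R1 t = poly (\<Prod>a\<leftarrow>as. [:- a, 1:]) t * Q t"
    proof (cases "t = a")
      case True
      have "poly R1 a = poly (\<Prod>a\<leftarrow>as. [:- a, 1:]) a * Q a"
        by (rule cont_agree[OF U aU, where f = "poly R1" and g = "\<lambda>t. poly (\<Prod>a\<leftarrow>as. [:- a, 1:]) t * Q t"])
           (auto intro!: continuous_intros Q eq1)
      then show ?thesis using True by simp
    qed (use eq1 t in auto)
  qed
  then have "(\<Prod>a\<leftarrow>as. [:- a, 1:]) dvd R1" using Cons by auto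
  then show ?case unfolding prod_map_Cons R1 by (rule mult_dvd_mono[OF dvd_refl])
qed

lemma dvd_deg_zero:
  fixes R S :: "complex poly"
  assumes "S dvd R" "degree R \<le> degree S" "poly R 0 = 0" "poly S 0 \<noteq> 0"
  shows "R = 0"
proof (rule ccontr)
  assume R0: "R \<noteq> 0"
  obtain Q where Q: "R = S * Q" using assms(1) by (auto simp: dvd_def)
  have Q0: "Q \<noteq> 0" "S \<noteq> 0" using R0 Q by auto
  then have "degree R = degree S + degree Q" using Q by (simp add: degree_mult_eq)
  then have dQ: "degree Q = 0" using assms(2) by simp
  have "poly Q 0 = 0" using assms(3,4) Q by simp
  then have "coeff Q 0 = 0" by (simp add: poly_0_coeff_0)
  then have "lead_coeff Q = 0" using dQ by simp
  then show False using Q0 by simp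
qed

lemma smult_mult_smult: "smult a p * smult b q = smult (a * b) (p * (q :: complex poly))"
  by (simp only: mult_smult_left mult_smult_right smult_smult mult.commute)

lemma inv_lin_prod:
  assumes "\<forall>x\<in>set us. (x::complex) \<noteq> 0"
  shows "(\<Prod>x\<leftarrow>us. [:- inverse x, 1:]) = smult (\<Prod>x\<leftarrow>us. - inverse x) (\<Prod>x\<leftarrow>us. [:1, - x:])"
  using assms
proof (induction us)
  case (Cons a us)
  have e: "[:- inverse a, 1:] = smult (- inverse a) [:1, - a:]" using Cons.prems by simp
  have "(\<Prod>x\<leftarrow>a # us. [:- inverse x, 1:]) = smult (- inverse a) [:1, - a:] *
          smult (\<Prod>x\<leftarrow>us. - inverse x) (\<Prod>x\<leftarrow>us. [:1, - x:])"
    unfolding prod_map_Cons e using Cons by simp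
  also have "\<dots> = smult (- inverse a * (\<Prod>x\<leftarrow>us. - inverse x)) ([:1, - a:] * (\<Prod>x\<leftarrow>us. [:1, - x:]))"
    by (rule smult_mult_smult)
  also have "\<dots> = smult (\<Prod>x\<leftarrow>a # us. - inverse x) (\<Prod>x\<leftarrow>a # us. [:1, - x:])"
    by (simp only: prod_map_Cons)
  finally show ?case .
qed simp

context kset
begin

lemma Ff_radius:
  assumes q: "norm z * T < 1"
  shows "fps_conv_radius (Ff z) \<ge> 1"
  unfolding fps_conv_radius_def
proof (rule conv_radius_geI_ex')
  fix r :: real assume r: "0 < r" "ereal r < 1"
  define C where "C = 1 / (1 - norm z * T)"
  have g: "summable (\<lambda>n. C * r ^ n)" using r by (intro summable_mult summable_geometric) auto
  show "summable (\<lambda>n. fps_nth (Ff z) n * of_real r ^ n)"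
  proof (rule summable_comparison_test[OF _ g], intro exI allI impI)
    fix n :: nat
    have "norm (fps_nth (Ff z) n * of_real r ^ n) = norm (Gf S p (int n) z) * r ^ n"
      using r by (simp add: Ff_nth norm_mult norm_power)
    also have "\<dots> \<le> C * r ^ n" unfolding C_def using Gf_bound[OF q] r
      by (intro mult_right_mono) auto
    finally show "norm (fps_nth (Ff z) n * of_real r ^ n) \<le> C * r ^ n" .
  qed
qed

lemma main_nonzero:
  assumes z: "z \<noteq> 0" and r0: "0 < r0" "r0 \<le> 1 / 2" and zs: "norm z * T < r0 ^ H"
    and us: "mset us = filter_mset (\<lambda>x. norm x < r0) (proots (kernel_poly S p z))"
  shows "\<forall>k. Gf S p (int k) z = hcomplete k us" "length us = H" "\<forall>x\<in>set us. x \<noteq> 0 \<and> norm x < r0"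
proof -
  let ?K = "kernel_poly S p z"
  have r01: "r0 \<le> 1" using r0 by simp
  note sr = split_roots[OF z r0(1) r01 zs]
  show len: "length us = H" using sr(1) us by (metis size_mset)
  show small: "\<forall>x\<in>set us. x \<noteq> 0 \<and> norm x < r0" using sr(3) us by (metis set_mset_mset)
  have rH: "r0 ^ H \<le> 1" using r0 by (intro power_le_one) auto
  have q1: "norm z * T < 1" using zs rH by simp
  define Sp where "Sp = (\<Prod>x\<leftarrow>us. [:- x, 1:])"
  define V where "V = (\<Prod>x\<leftarrow>us. [:1, - x:])"
  have xs: "mset (us @ map inverse us) = proots ?K" using sr(2) us by simp
  define lc where "lc = lead_coeff ?K"
  define c where "c = lc * (\<Prod>x\<leftarrow>us. - inverse x)"
  have e1: "(\<Prod>x\<leftarrow>us @ map inverse us. [:- x, 1:]) = Sp * (\<Prod>x\<leftarrow>us. [:- inverse x, 1:])"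
    unfolding Sp_def by (simp add: o_def)
  have e2: "(\<Prod>x\<leftarrow>us. [:- inverse x, 1:]) = smult (\<Prod>x\<leftarrow>us. - inverse x) V"
    unfolding V_def by (rule inv_lin_prod) (use small in auto)
  have K1: "?K = smult lc (Sp * smult (\<Prod>x\<leftarrow>us. - inverse x) V)"
    using K_decomp[OF xs, folded lc_def] unfolding e1 e2 .
  have Kf: "?K = smult c (Sp * V)" unfolding c_def by (subst K1) (simp add: mult_smult_right)
  have degSp: "degree Sp = H" unfolding Sp_def using poly_lin_prod_degree len by simp
  have KH: "fps_of_poly ?K * Hf us = fps_const c * fps_of_poly Sp"
  proof -
    have "fps_of_poly ?K * Hf us = fps_const c * fps_of_poly Sp * (fps_of_poly V * Hf us)"
      by (subst Kf) (simp add: fps_of_poly_smult fps_of_poly_mult mult_ac)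
    also have "fps_of_poly V * Hf us = 1" unfolding V_def by (rule Hf_prod)
    finally show ?thesis by simp
  qed
  define D where "D = Ff z - Hf us"
  have KD: "fps_nth (fps_of_poly ?K * D) n = 0" if "n > H" for n
  proof -
    have "fps_nth (fps_of_poly ?K * D) n = fps_nth (fps_of_poly ?K * Ff z) n - fps_nth (fps_of_poly ?K * Hf us) n"
      unfolding D_def by (simp add: ring_distribs)
    also have "fps_nth (fps_of_poly ?K * Ff z) n = 0" by (rule KF_coeff[OF q1 that])
    also have "fps_nth (fps_of_poly ?K * Hf us) n = 0"
      unfolding KH using that degSp by (simp add: coeff_eq_0)
    finally show ?thesis by simp
  qed
  have D0: "fps_nth D 0 = 0" unfolding D_def by (simp add: Ff_nth Hf_nth Gf_zero hcomplete_0)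
  have KD0: "fps_nth (fps_of_poly ?K * D) 0 = 0"
    using D0 by (auto simp: fps_mult_nth)
  define R where "R = Poly (map (\<lambda>i. fps_nth (fps_of_poly ?K * D) i) [0..<Suc H])"
  have cR: "coeff R n = fps_nth (fps_of_poly ?K * D) n" for n
  proof (cases "n < Suc H")
    case True
    then show ?thesis unfolding R_def by (simp add: nth_default_def del: upt_Suc)
  next
    case False
    then show ?thesis unfolding R_def using KD[of n] by (simp add: nth_default_def del: upt_Suc)
  qed
  have fR: "fps_of_poly R = fps_of_poly ?K * D" by (rule fps_ext) (simp add: cR)
  have degR: "degree R \<le> H"
    by (rule degree_le) (use KD cR in auto)
  have R0: "poly R 0 = 0" by (simp only: poly_0_coeff_0 cR KD0)
  have usmall: "\<forall>x\<in>set us. norm x < 1 / 2" using small r0 by fastforce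
  have rD: "fps_conv_radius D \<ge> 1"
  proof -
    have "fps_conv_radius D \<ge> min (fps_conv_radius (Ff z)) (fps_conv_radius (Hf us))"
      unfolding D_def by (rule fps_conv_radius_diff)
    moreover have "fps_conv_radius (Ff z) \<ge> 1" by (rule Ff_radius[OF q1])
    moreover have "fps_conv_radius (Hf us) \<ge> 1"
      using Hf_radius_eval[OF usmall] by (metis one_le_numeral order_trans numeral_eq_ereal ereal_less_eq(3) one_ereal_def)
    ultimately show ?thesis by (auto simp: min_def split: if_splits)
  qed
  have ballsub: "ball 0 1 \<subseteq> eball 0 (fps_conv_radius D)" by (rule ball_eball_mono) (use rD in \<open>simp add: one_ereal_def\<close>)
  have eq: "\<forall>t\<in>ball 0 1. poly R t = poly Sp t * (c * poly V t * eval_fps D t)"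
  proof
    fix t :: complex assume t: "t \<in> ball 0 1"
    then have "t \<in> eball 0 (fps_conv_radius D)" using ballsub by blast
    then have tD: "ereal (norm t) < fps_conv_radius D" by simp
    have "poly R t = eval_fps (fps_of_poly R) t" by simp
    also have "\<dots> = eval_fps (fps_of_poly ?K) t * eval_fps D t"
      unfolding fR by (rule eval_fps_mult) (use tD in auto)
    also have "\<dots> = poly Sp t * (c * poly V t * eval_fps D t)"
      by (subst Kf) (simp add: mult_ac)
    finally show "poly R t = poly Sp t * (c * poly V t * eval_fps D t)" .
  qed
  have cont: "continuous_on (ball 0 1) (\<lambda>t. c * poly V t * eval_fps D t)"
    by (intro continuous_intros) (use ballsub in auto)
  have "Sp dvd R" unfolding Sp_def
    by (rule dvd_from_analytic[OF open_ball _ cont]) (use small r0 eq Sp_def in \<open>auto simp: dist_norm\<close>)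
  moreover have "poly Sp 0 \<noteq> 0"
    unfolding Sp_def using small by (auto simp: poly_prod_list_map prod_list_zero_iff)
  ultimately have "R = 0" using dvd_deg_zero degR degSp R0 by auto
  then have "fps_of_poly ?K * D = 0" using fR by simp
  moreover have "fps_of_poly ?K \<noteq> 0" using K_ne0[OF z] fps_of_poly_eq_iff[of ?K 0] by simp
  ultimately have "D = 0" by simp
  then have "Ff z = Hf us" unfolding D_def by simp
  then show "\<forall>k. Gf S p (int k) z = hcomplete k us"
    by (metis Ff_nth Hf_nth)
qed

end

lemma fin_support_has_sum:
  fixes g :: "nat \<Rightarrow> 'a::{comm_monoid_add, topological_space}"
  assumes "\<And>k. k > N \<Longrightarrow> g k = 0"
  shows "(g has_sum (\<Sum>k\<le>N. g k)) UNIV"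
proof -
  have "(g has_sum (\<Sum>k\<le>N. g k)) {..N}" by simp
  moreover have "(g has_sum (\<Sum>k\<le>N. g k)) UNIV \<longleftrightarrow> (g has_sum (\<Sum>k\<le>N. g k)) {..N}"
    by (rule has_sum_cong_neutral) (use assms in auto)
  ultimately show ?thesis by simp
qed

lemma int_image_atMost: "int ` {..m} = {0..int m}"
proof (intro equalityI subsetI)
  fix x assume "x \<in> {0..int m}"
  then have "x = int (nat x)" "nat x \<in> {..m}" by auto
  then show "x \<in> int ` {..m}" by blast
qed auto

lemma sigma_helper:
  fixes f :: "nat \<Rightarrow> nat \<Rightarrow> complex"
  assumes P': "(\<lambda>(k, n). f n k) summable_on UNIV \<times> UNIV"
  shows "(\<lambda>k. infsum (\<lambda>n. f n k) UNIV) summable_on UNIV"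
proof -
  have "(\<lambda>(x, y). (\<lambda>k n. f n k) x y) summable_on (Sigma UNIV (\<lambda>_. UNIV))" using P' by simp
  from Infinite_Sum.summable_on_Sigma_banach[OF this] show ?thesis by simp
qed

lemma swap_helper:
  fixes f :: "nat \<Rightarrow> nat \<Rightarrow> complex"
  assumes P': "(\<lambda>(k, n). f n k) summable_on UNIV \<times> UNIV"
  shows "infsum (\<lambda>k. infsum (\<lambda>n. f n k) UNIV) UNIV = infsum (\<lambda>n. infsum (\<lambda>k. f n k) UNIV) UNIV"
proof -
  have "(\<lambda>(x, y). (\<lambda>k n. f n k) x y) summable_on (UNIV \<times> UNIV)" using P' by simp
  from infsum_swap_banach[OF this] show ?thesis by simp
qed

context kset
begin

lemma M_coeff_nat: "M_coeff S p n = (\<Sum>k\<le>n * H. G_coeff S p (int k) n)"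
proof -
  have e: "{0..int n * M} = int ` {..n * H}"
    using intH int_image_atMost[of "n * H"] by (metis of_nat_mult)
  have "M_coeff S p n = (\<Sum>k\<in>int ` {..n * H}. G_coeff S p k n)"
    by (simp only: M_coeff_group[OF fin] e)
  also have "\<dots> = (\<Sum>k\<le>n * H. G_coeff S p (int k) n)"
    by (subst sum.reindex) (auto simp: inj_on_def)
  finally show ?thesis .
qed

lemma G_big_nat: "k > n * H \<Longrightarrow> G_coeff S p (int k) n = 0"
  by (rule G_coeff_big[OF fin]) (use intH in \<open>simp, metis of_nat_less_iff of_nat_mult\<close>)

lemma Mf_sums:
  assumes q: "norm z * T < 1"
  shows "(\<lambda>k. Gf S p (int k) z) sums Mf S p z"
proof -
  define f where "f n k = complex_of_real (G_coeff S p (int k) n) * z ^ n" for n k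
  have row: "((\<lambda>k. f n k) has_sum (complex_of_real (M_coeff S p n) * z ^ n)) UNIV" for n
  proof -
    have "((\<lambda>k. f n k) has_sum (\<Sum>k\<le>n * H. f n k)) UNIV"
      by (rule fin_support_has_sum) (simp add: f_def G_big_nat)
    moreover have "(\<Sum>k\<le>n * H. f n k) = complex_of_real (M_coeff S p n) * z ^ n"
      unfolding f_def M_coeff_nat by (simp add: sum_distrib_right)
    ultimately show ?thesis by simp
  qed
  have nrow: "((\<lambda>k. norm (f n k)) has_sum (M_coeff S p n * norm z ^ n)) UNIV" for n
  proof -
    have "((\<lambda>k. norm (f n k)) has_sum (\<Sum>k\<le>n * H. norm (f n k))) UNIV"
      by (rule fin_support_has_sum) (simp add: f_def G_big_nat)
    moreover have "(\<Sum>k\<le>n * H. norm (f n k)) = M_coeff S p n * norm z ^ n"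
      unfolding f_def M_coeff_nat using G_coeff_nonneg[OF pos]
      by (simp add: sum_distrib_right norm_mult norm_power)
    ultimately show ?thesis by simp
  qed
  have Mbound: "norm (M_coeff S p n * norm z ^ n) \<le> (norm z * T) ^ n" for n
  proof -
    have M0: "M_coeff S p n \<ge> 0" unfolding M_coeff_def
      by (rule sum_nonneg) (auto intro: walk_weight_nonneg[OF pos])
    have "norm (M_coeff S p n * norm z ^ n) = M_coeff S p n * norm z ^ n" using M0 by simp
    also have "\<dots> \<le> T ^ n * norm z ^ n" using M_coeff_le[OF fin pos] by (intro mult_right_mono) auto
    finally show ?thesis by (simp add: power_mult_distrib mult.commute)
  qed
  have geo: "summable (\<lambda>n. (norm z * T) ^ n)" using q T_pos by (intro summable_geometric) auto
  have Msum: "summable (\<lambda>n. norm (M_coeff S p n * norm z ^ n))"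
    by (rule summable_comparison_test[OF _ geo]) (use Mbound in auto)
  have abs: "(\<lambda>x. norm ((\<lambda>(n, k). f n k) x)) summable_on (SIGMA n:UNIV. UNIV)"
  proof (rule Infinite_Sum.abs_summable_on_Sigma_iff[THEN iffD2], intro conjI ballI)
    fix n :: nat
    show "(\<lambda>k. norm ((\<lambda>(n, k). f n k) (n, k))) summable_on UNIV"
      using nrow[of n] by (auto simp: summable_on_def)
  next
    have "infsum (\<lambda>k. norm ((\<lambda>(n, k). f n k) (n, k))) UNIV = M_coeff S p n * norm z ^ n" for n
      using nrow[of n] by (simp add: infsumI)
    moreover have "(\<lambda>n. norm (M_coeff S p n * norm z ^ n)) summable_on UNIV"
      by (rule norm_summable_imp_summable_on) (use Msum in simp)
    ultimately show "(\<lambda>n. norm (infsum (\<lambda>k. norm ((\<lambda>(n, k). f n k) (n, k))) UNIV)) summable_on UNIV"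
      by simp
  qed
  have P: "(\<lambda>(n, k). f n k) summable_on (UNIV \<times> UNIV)"
    by (rule Infinite_Sum.abs_summable_summable[OF abs])
  have P': "(\<lambda>(k, n). f n k) summable_on (UNIV \<times> UNIV)"
  proof -
    have "(\<lambda>(n, k). f n k) summable_on (prod.swap ` (UNIV \<times> UNIV))" using P by (simp only: product_swap)
    then have "((\<lambda>(n, k). f n k) \<circ> prod.swap) summable_on (UNIV \<times> UNIV)"
      by (subst (asm) summable_on_reindex) auto
    then show ?thesis by (simp add: o_def case_prod_unfold)
  qed
  have col: "((\<lambda>n. f n k) has_sum Gf S p (int k) z) UNIV" for k
    using norm_summable_imp_has_sum[OF Gf_summable(1)[OF q, of "int k"] Gf_sums[OF q, of "int k"]]
    unfolding f_def .
  have Mhs: "((\<lambda>n. complex_of_real (M_coeff S p n) * z ^ n) has_sum Mf S p z) UNIV"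
  proof (rule norm_summable_imp_has_sum)
    show sn: "summable (\<lambda>n. norm (complex_of_real (M_coeff S p n) * z ^ n))"
      using Msum by (simp add: norm_mult norm_power abs_mult)
    show "(\<lambda>n. complex_of_real (M_coeff S p n) * z ^ n) sums Mf S p z"
      unfolding Mf_def by (rule summable_sums[OF summable_norm_cancel[OF sn]])
  qed
  have sw: "infsum (\<lambda>k. infsum (\<lambda>n. f n k) UNIV) UNIV = infsum (\<lambda>n. infsum (\<lambda>k. f n k) UNIV) UNIV"
    using swap_helper[OF P'] .
  have s1: "(\<lambda>k. infsum (\<lambda>n. f n k) UNIV) summable_on UNIV"
    using sigma_helper[OF P'] .
  have e1: "(\<lambda>k. infsum (\<lambda>n. f n k) UNIV) = (\<lambda>k. Gf S p (int k) z)"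
    by (rule ext, rule infsumI, rule col)
  have e2: "(\<lambda>n. infsum (\<lambda>k. f n k) UNIV) = (\<lambda>n. complex_of_real (M_coeff S p n) * z ^ n)"
    by (rule ext, rule infsumI, rule row)
  have "((\<lambda>k. Gf S p (int k) z) has_sum Mf S p z) UNIV"
    using s1 sw e1 e2 infsumI[OF Mhs] by (simp add: summable_iff_has_sum_infsum)
  then show ?thesis by (rule has_sum_imp_sums)
qed

end

lemma geo_0: "geo 0 = 1"
  by (rule fps_ext) (simp add: geo_def)

lemma Hf_zeros: "Hf (replicate n 0) = 1"
  by (induction n) (simp_all add: Hf_Nil Hf_Cons geo_0)

lemma hcomplete_zeros: "k \<ge> 1 \<Longrightarrow> hcomplete k (replicate n 0) = 0"
  using Hf_nth[of "replicate n 0" k] Hf_zeros[of n] by simp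

context kset
begin

lemma case_zero:
  assumes r: "r > 0"
  shows "\<exists>us. mset us = roots_in_disk S p r 0 \<and> length us = H \<and>
     (\<lambda>k. Gf S p (int (Suc k)) 0) sums (Mf S p 0 - 1) \<and>
     Mf S p 0 = (\<Prod>u\<leftarrow>us. 1 / (1 - u)) \<and>
     (\<forall>k::nat. k \<ge> 1 \<longrightarrow> Gf S p (int k) 0 = hcomplete k us)"
proof (intro exI conjI)
  let ?us = "replicate H (0::complex)"
  have K0: "kernel_poly S p 0 = [:0, 1:] ^ H"
    by (simp add: kernel_poly_def monom_altdef)
  have "proots (kernel_poly S p 0) = repeat_mset H {#0#}"
    unfolding K0 proots_power using proots_linear_factor[of 0] by simp
  also have "repeat_mset H {#0::complex#} = mset ?us"
    by (induction H) auto
  finally have e: "roots_in_disk S p r 0 = filter_mset (\<lambda>u. cmod u < r) (mset ?us)"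
    unfolding roots_in_disk_def by simp
  have "filter_mset (\<lambda>u. cmod u < r) (mset ?us) = mset (filter (\<lambda>u. cmod u < r) ?us)"
    by (rule mset_filter[symmetric])
  also have "filter (\<lambda>u. cmod u < r) ?us = ?us" using r by simp
  finally show "mset ?us = roots_in_disk S p r 0" using e by simp
  show "length ?us = H" by simp
  have G0: "Gf S p k 0 = (if k = 0 then 1 else 0)" for k
    unfolding Gf_def using powser_zero[of "\<lambda>n. complex_of_real (G_coeff S p k n)"]
    by (simp add: G_coeff_0)
  have M0: "Mf S p 0 = 1"
  proof -
    have "M_coeff S p 0 = 1"
    proof -
      have "{ws. set ws \<subseteq> S \<and> length ws = 0 \<and> positive_walk ws} = {[]}"
        by (auto simp: positive_walk_def)
      then show ?thesis unfolding M_coeff_def by (simp add: walk_weight_def)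
    qed
    then show ?thesis unfolding Mf_def using powser_zero[of "\<lambda>n. complex_of_real (M_coeff S p n)"]
      by simp
  qed
  show "(\<lambda>k. Gf S p (int (Suc k)) 0) sums (Mf S p 0 - 1)" by (simp add: G0 M0)
  show "Mf S p 0 = (\<Prod>u\<leftarrow>?us. 1 / (1 - u))" by (simp add: M0)
  show "\<forall>k::nat. k \<ge> 1 \<longrightarrow> Gf S p (int k) 0 = hcomplete k ?us"
    by (simp add: G0 hcomplete_zeros)
qed

lemma case_nonzero:
  assumes z: "z \<noteq> 0" and r: "r > 0" and r0: "0 < r0" "r0 \<le> 1 / 2" "r0 \<le> r" "r0 \<le> 1 / r"
    and zs: "norm z * T < r0 ^ H"
  shows "\<exists>us. mset us = roots_in_disk S p r z \<and> length us = H \<and>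
     (\<lambda>k. Gf S p (int (Suc k)) z) sums (Mf S p z - 1) \<and>
     Mf S p z = (\<Prod>u\<leftarrow>us. 1 / (1 - u)) \<and>
     (\<forall>k::nat. k \<ge> 1 \<longrightarrow> Gf S p (int k) z = hcomplete k us)"
proof -
  let ?K = "kernel_poly S p z"
  obtain us where us: "mset us = filter_mset (\<lambda>x. norm x < r0) (proots ?K)"
    using ex_mset by blast
  note mn = main_nonzero[OF z r0(1,2) zs us]
  have r01: "r0 \<le> 1" using r0 by simp
  note sr = split_roots[OF z r0(1) r01 zs]
  have rid: "roots_in_disk S p r z = filter_mset (\<lambda>x. norm x < r0) (proots ?K)"
    unfolding roots_in_disk_def
  proof (rule filter_mset_cong[OF refl])
    fix x assume "x \<in># proots ?K"
    then have "norm x < r0 \<or> norm x > 1 / r0" using sr(4) by blast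
    moreover have "1 / r0 \<ge> r" using r0 r by (simp add: field_simps)
    ultimately show "(norm x < r) = (norm x < r0)" using r0 by auto
  qed
  have rH: "r0 ^ H \<le> 1" using r0 by (intro power_le_one) auto
  have q: "norm z * T < 1" using zs rH by simp
  have Ms: "(\<lambda>k. Gf S p (int k) z) sums Mf S p z" by (rule Mf_sums[OF q])
  have usmall: "\<forall>x\<in>set us. norm x < 1 / 2" using mn(3) r0 by fastforce
  have Hs: "(\<lambda>k. Gf S p (int k) z) sums (\<Prod>x\<leftarrow>us. 1 / (1 - x))"
    using hcomplete_sums[OF usmall] mn(1) by simp
  have Meq: "Mf S p z = (\<Prod>x\<leftarrow>us. 1 / (1 - x))" using Ms Hs sums_unique2 by blast
  have "(\<lambda>k. Gf S p (int (Suc k)) z) sums (Mf S p z - 1)"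
  proof (rule iffD2[OF sums_Suc_iff])
    show "(\<lambda>k. Gf S p (int k) z) sums (Mf S p z - 1 + Gf S p (int 0) z)"
      using Ms by (simp add: Gf_zero)
  qed
  then show ?thesis using us rid mn Meq by (intro exI[of _ us]) auto
qed

lemma final:
  "\<forall>r>0. \<exists>\<epsilon>>0. \<forall>z::complex. cmod z < \<epsilon> \<longrightarrow>
     (\<exists>us. mset us = roots_in_disk S p r z \<and> length us = H \<and>
        (\<lambda>k. Gf S p (int (Suc k)) z) sums (Mf S p z - 1) \<and>
        Mf S p z = (\<Prod>u\<leftarrow>us. 1 / (1 - u)) \<and>
        (\<forall>k::nat. k \<ge> 1 \<longrightarrow> Gf S p (int k) z = hcomplete k us))"
proof (intro allI impI)
  fix r :: real assume r: "r > 0"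
  define r0 where "r0 = min (1 / 2) (min r (1 / r))"
  have r0: "0 < r0" "r0 \<le> 1 / 2" "r0 \<le> r" "r0 \<le> 1 / r" using r unfolding r0_def by auto
  define \<epsilon> where "\<epsilon> = r0 ^ H / (2 * T)"
  have ep: "\<epsilon> > 0" unfolding \<epsilon>_def using r0 T_pos by simp
  show "\<exists>\<epsilon>>0. \<forall>z::complex. cmod z < \<epsilon> \<longrightarrow>
     (\<exists>us. mset us = roots_in_disk S p r z \<and> length us = H \<and>
        (\<lambda>k. Gf S p (int (Suc k)) z) sums (Mf S p z - 1) \<and>
        Mf S p z = (\<Prod>u\<leftarrow>us. 1 / (1 - u)) \<and>
        (\<forall>k::nat. k \<ge> 1 \<longrightarrow> Gf S p (int k) z = hcomplete k us))"
  proof (intro exI[of _ \<epsilon>] conjI allI impI ep)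
    fix z :: complex assume z: "cmod z < \<epsilon>"
    show "\<exists>us. mset us = roots_in_disk S p r z \<and> length us = H \<and>
        (\<lambda>k. Gf S p (int (Suc k)) z) sums (Mf S p z - 1) \<and>
        Mf S p z = (\<Prod>u\<leftarrow>us. 1 / (1 - u)) \<and>
        (\<forall>k::nat. k \<ge> 1 \<longrightarrow> Gf S p (int k) z = hcomplete k us)"
    proof (cases "z = 0")
      case True
      then show ?thesis using case_zero[OF r] by simp
    next
      case False
      have pos': "r0 ^ H > 0" using r0 by simp
      have "norm z * T < \<epsilon> * T" using z T_pos by (intro mult_strict_right_mono) auto
      also have "\<epsilon> * T = r0 ^ H / 2" unfolding \<epsilon>_def using T_pos by (simp add: field_simps)
      also have "\<dots> < r0 ^ H" using pos' by simp
      finally have zs: "norm z * T < r0 ^ H" .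
      show ?thesis by (rule case_nonzero[OF False r r0 zs])
    qed
  qed
qed

end

theorem theorem4p1:
  fixes S :: "int set" and p :: "int \<Rightarrow> real" and h :: int
  assumes "finite S" and "S \<noteq> {}"
    and "\<forall>s\<in>S. p s > 0"
    and "\<forall>u::complex. u \<noteq> 0 \<longrightarrow> stepP S p u = stepP S p (1 / u)"
    and "h = Max S" and "h \<ge> 1"
  shows "\<forall>r>0. \<exists>\<epsilon>>0. \<forall>z::complex. cmod z < \<epsilon> \<longrightarrow>
           (\<exists>us. mset us = roots_in_disk S p r z \<and> length us = nat h \<and>
              (\<lambda>k. Gf S p (int (Suc k)) z) sums (Mf S p z - 1) \<and>
              Mf S p z = (\<Prod>u\<leftarrow>us. 1 / (1 - u)) \<and>
              (\<forall>k::nat. k \<ge> 1 \<longrightarrow> Gf S p (int k) z = hcomplete k us))"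
proof -
  interpret kset S p
  proof
    show "finite S" by (rule assms(1))
    show "S \<noteq> {}" by (rule assms(2))
    show "\<forall>s\<in>S. p s > 0" by (rule assms(3))
    show "\<forall>u::complex. u \<noteq> 0 \<longrightarrow> stepP S p u = stepP S p (1 / u)" by (rule assms(4))
    show "Max S \<ge> 1" using assms(5,6) by simp
  qed
  have hH: "nat h = nat (Max S)" using assms(5) by simp
  show ?thesis unfolding hH by (rule final)
qed

end
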